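(* Let $(y(n))_{n\ge1}$ be a sequence of positive reals and suppose it has Poissonian pair correlation in the sense that for every real-valued $g\in C_c^\infty(\mathbb{R})$, $$\lim_{N\to\infty}\frac1N\sum_{\substack{n_1,n_2\in[N]\\ n_1\neq n_2}}\sum_{k\in\mathbb{Z}} g\big(N(y(n_1)-y(n_2)+k)\big)=\int_{\mathbb{R}} g .$$ Let $f\in C_c^\infty(\mathbb{R})$ be real-valued and define $F(z_1,z_2):=\int_{\mathbb{R}} f(s)f(z_1+z_2+s)f(z_2+s)\,\mathrm{d}s$. Then $$\lim_{N\to\infty}\frac1N\sum^{*}_{\mathbf{n}\in[N]^3}\sum_{\mathbf{k}\in\mathbb{Z}^2}F\big(N(y(n_1)-y(n_2)+k_1),\,N(y(n_2)-y(n_3)+k_2)\big)=\Big(\int_{\mathbb{R}} f\Big)^3$$ holds if and only if $$\lim_{N\to\infty}\mathcal{M}^{(3)}(N)=\mathbf{E}(f)^3+3\,\mathbf{E}(f)\,\mathbf{E}(f^2)+\mathbf{E}(f^3).$$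
   Context: $[N]=\{1,\dots,N\}$; $\sum^*$ denotes summation over triples $\mathbf{n}=(n_1,n_2,n_3)$ with pairwise distinct entries. For $h$ integrable on $\mathbb{R}$, $\mathbf{E}(h):=\int_{\mathbb{R}}h(x)\,\mathrm{d}x$; so $\mathbf{E}(f^j)=\int_{\mathbb{R}} f(x)^j\,\mathrm{d}x$. Define $S_N(s):=\sum_{n\in[N]}\sum_{k\in\mathbb{Z}} f(N(y(n)+k+s))$ and $\mathcal{M}^{(3)}(N):=\int_0^1 S_N(s)^3\,\mathrm{d}s$. *)

theory Defs
  imports "HOL-Analysis.Analysis"
begin

definition smooth_cc :: "(real \<Rightarrow> real) \<Rightarrow> bool" where
  "smooth_cc g \<longleftrightarrow>
     (\<forall>k::nat. \<forall>x::real. ((deriv ^^ k) g) differentiable (at x)) \<and>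
     compact (closure {x. g x \<noteq> 0})"

definition Eint :: "(real \<Rightarrow> real) \<Rightarrow> real" where
  "Eint h = (LINT x|lborel. h x)"

definition pair_corr :: "(nat \<Rightarrow> real) \<Rightarrow> (real \<Rightarrow> real) \<Rightarrow> nat \<Rightarrow> real" where
  "pair_corr y g N = (1 / real N) *
     (\<Sum>n1\<in>{1..N}. \<Sum>n2\<in>{1..N} - {n1}.
        (\<Sum>\<^sub>\<infinity>k::int. g (real N * (y n1 - y n2 + real_of_int k))))"

definition triple_F :: "(real \<Rightarrow> real) \<Rightarrow> real \<Rightarrow> real \<Rightarrow> real" where
  "triple_F f z1 z2 = (LINT s|lborel. f s * f (z1 + z2 + s) * f (z2 + s))"

definition distinct_triples :: "nat \<Rightarrow> (nat \<times> nat \<times> nat) set" where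
  "distinct_triples N = {(n1, n2, n3). n1 \<in> {1..N} \<and> n2 \<in> {1..N} \<and> n3 \<in> {1..N} \<and>
       n1 \<noteq> n2 \<and> n1 \<noteq> n3 \<and> n2 \<noteq> n3}"

definition triple_corr :: "(nat \<Rightarrow> real) \<Rightarrow> (real \<Rightarrow> real) \<Rightarrow> nat \<Rightarrow> real" where
  "triple_corr y f N = (1 / real N) *
     (\<Sum>(n1, n2, n3)\<in>distinct_triples N.
        infsum (\<lambda>(k1::int, k2::int).
           triple_F f (real N * (y n1 - y n2 + real_of_int k1))
                      (real N * (y n2 - y n3 + real_of_int k2))) UNIV)"

definition S_N :: "(nat \<Rightarrow> real) \<Rightarrow> (real \<Rightarrow> real) \<Rightarrow> nat \<Rightarrow> real \<Rightarrow> real" where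
  "S_N y f N s = (\<Sum>n\<in>{1..N}. (\<Sum>\<^sub>\<infinity>k::int. f (real N * (y n + real_of_int k + s))))"

definition M3 :: "(nat \<Rightarrow> real) \<Rightarrow> (real \<Rightarrow> real) \<Rightarrow> nat \<Rightarrow> real" where
  "M3 y f N = (LINT s:{0..1}|lborel. (S_N y f N s) ^ 3)"

end

theory Submission
  imports Defs
begin


lemma cs_integrable:
  fixes h :: "real \<Rightarrow> real"
  assumes "continuous_on UNIV h" "\<And>x. C < \<bar>x\<bar> \<Longrightarrow> h x = 0"
  shows "integrable lborel h"
proof -
  have "integrable lborel (\<lambda>x. indicator {-C..C} x *\<^sub>R h x)"
    by (rule borel_integrable_compact) (auto intro: continuous_on_subset[OF assms(1)])
  moreover have "(\<lambda>x. indicator {-C..C} x *\<^sub>R h x) = h"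
    using assms(2) by (force simp: indicator_def abs_le_iff)
  ultimately show ?thesis by simp
qed

locale fsupp =
  fixes f :: "real \<Rightarrow> real" and R :: real
  assumes cont: "continuous_on UNIV f" and supp: "\<And>x. R < \<bar>x\<bar> \<Longrightarrow> f x = 0"
    and Rpos: "0 < R"
begin

lemma f_nz: "f x \<noteq> 0 \<Longrightarrow> \<bar>x\<bar> \<le> R"
  using supp by force

lemma contf[continuous_intros]: "continuous_on S g \<Longrightarrow> continuous_on S (\<lambda>x. f (g x))"
  by (rule continuous_on_compose2[OF cont]) auto

lemma F_nz:
  assumes "triple_F f z1 z2 \<noteq> 0"
  shows "\<bar>z1\<bar> \<le> 2*R \<and> \<bar>z2\<bar> \<le> 2*R \<and> \<bar>z1+z2\<bar> \<le> 2*R"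
proof (rule ccontr)
  assume a: "\<not> ?thesis"
  have "\<And>s. f s * f (z1 + z2 + s) * f (z2 + s) = 0"
  proof -
    fix s
    show "f s * f (z1 + z2 + s) * f (z2 + s) = 0"
    proof (rule ccontr)
      assume "\<not> ?thesis"
      then have "f s \<noteq> 0" "f (z1+z2+s) \<noteq> 0" "f (z2+s) \<noteq> 0" by auto
      then have "\<bar>s\<bar> \<le> R" "\<bar>z1+z2+s\<bar> \<le> R" "\<bar>z2+s\<bar> \<le> R" using f_nz by auto
      then show False using a by auto
    qed
  qed
  then have "(\<lambda>s. f s * f (z1 + z2 + s) * f (z2 + s)) = (\<lambda>s. 0)" by auto
  then have "triple_F f z1 z2 = 0" unfolding triple_F_def by simp
  then show False using assms by simp
qed

end



lemma indicator_floor: "indicator {real_of_int k..<real_of_int k+1} (x::real) = (if k = \<lfloor>x\<rfloor> then 1 else (0::real))"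
  using floor_eq_iff[of x k] by (auto simp: indicator_def)

lemma cont_meas: "continuous_on UNIV (h::real\<Rightarrow>real) \<Longrightarrow> h \<in> borel_measurable lborel"
  using borel_measurable_continuous_onI by simp

lemma periodize:
  fixes u :: "real \<Rightarrow> real" and M :: nat
  assumes cu: "continuous_on UNIV u" and su: "\<And>x. C < \<bar>x\<bar> \<Longrightarrow> u x = 0" and M: "C + 1 \<le> M"
  shows "(LINT s:{0..1}|lborel. (\<Sum>k\<in>{-int M..int M}. u (s + real_of_int k))) = (LINT x|lborel. u x)"
proof -
  let ?K = "{-int M..int M}"
  have iu: "integrable lborel u" by (rule cs_integrable[OF cu su])
  have 1: "(LINT x|lborel. u x) = (LINT x|lborel. (\<Sum>k\<in>?K. indicator {real_of_int k..<real_of_int k+1} x * u x))"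
  proof (rule Bochner_Integration.integral_cong[OF refl])
    fix x
    have "(\<Sum>k\<in>?K. indicator {real_of_int k..<real_of_int k+1} x * u x) = (if \<lfloor>x\<rfloor> \<in> ?K then u x else 0)"
      unfolding indicator_floor sum_distrib_right[symmetric] by (simp add: sum.delta')
    also have "\<dots> = u x"
    proof (cases "\<lfloor>x\<rfloor> \<in> ?K")
      case False
      then have "x < - real M \<or> x \<ge> real M + 1"
        by (auto simp: floor_le_iff le_floor_iff)
      then have "C < \<bar>x\<bar>" using M by auto
      then show ?thesis using False su by simp
    qed simp
    finally show "u x = (\<Sum>k\<in>?K. indicator {real_of_int k..<real_of_int k+1} x * u x)" by simp
  qed
  also have "\<dots> = (\<Sum>k\<in>?K. LINT x|lborel. indicator {real_of_int k..<real_of_int k+1} x * u x)"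
    by (rule Bochner_Integration.integral_sum[where f="\<lambda>k x. indicator {real_of_int k..<real_of_int k+1} x * u x"])
       (use integrable_mult_indicator[OF _ iu] in auto)
  also have "\<dots> = (\<Sum>k\<in>?K. LINT s|lborel. indicator {0..<1} s * u (s + real_of_int k))"
  proof (rule sum.cong[OF refl])
    fix k :: int
    have "(LINT x|lborel. indicator {real_of_int k..<real_of_int k+1} x * u x) =
       \<bar>1\<bar> *\<^sub>R (LINT s|lborel. indicator {real_of_int k..<real_of_int k+1} (real_of_int k + 1 * s) * u (real_of_int k + 1 * s))"
      by (rule lborel_integral_real_affine) simp
    also have "\<dots> = (LINT s|lborel. indicator {0..<1} s * u (s + real_of_int k))"
      by (simp, intro Bochner_Integration.integral_cong) (auto simp: indicator_def add.commute)
    finally show "(LINT x|lborel. indicator {real_of_int k..<real_of_int k+1} x * u x) = (LINT s|lborel. indicator {0..<1} s * u (s + real_of_int k))" .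
  qed
  also have "\<dots> = (LINT s|lborel. (\<Sum>k\<in>?K. indicator {0..<1} s * u (s + real_of_int k)))"
  proof (rule Bochner_Integration.integral_sum[where f="\<lambda>k s. indicator {0..<1} s * u (s + real_of_int k)", symmetric])
    fix k :: int
    have "integrable lborel (\<lambda>s. u (s + real_of_int k))"
    proof (rule cs_integrable[where C="C + \<bar>real_of_int k\<bar>"])
      show "continuous_on UNIV (\<lambda>s. u (s + real_of_int k))"
        by (rule continuous_on_compose2[OF cu]) (auto intro!: continuous_intros)
    next
      fix x assume "C + \<bar>real_of_int k\<bar> < \<bar>x\<bar>"
      then have "C < \<bar>x + real_of_int k\<bar>" by linarith
      then show "u (x + real_of_int k) = 0" by (rule su)
    qed
    then show "integrable lborel (\<lambda>s. indicator {0..<1} s * u (s + real_of_int k))"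
      using integrable_mult_indicator[of "{0..<1}" lborel "\<lambda>s. u (s + real_of_int k)"] by simp
  qed
  also have "\<dots> = (LINT s:{0..1}|lborel. (\<Sum>k\<in>?K. u (s + real_of_int k)))"
    unfolding set_lebesgue_integral_def
  proof (rule integral_cong_AE)
    have cs: "continuous_on UNIV (\<lambda>s. \<Sum>k\<in>?K. u (s + real_of_int k))"
      by (intro continuous_intros continuous_on_compose2[OF cu]) auto
    have [measurable]: "(\<lambda>s. \<Sum>k\<in>?K. u (s + real_of_int k)) \<in> borel_measurable lborel"
      using borel_measurable_continuous_onI[OF cs] by simp
    have [measurable]: "(\<lambda>s. u (s + real_of_int k)) \<in> borel_measurable lborel" for k
      by (rule cont_meas, rule continuous_on_compose2[OF cu]) (auto intro: continuous_intros)
    show "(\<lambda>s. \<Sum>k\<in>?K. indicator {0..<1} s * u (s + real_of_int k)) \<in> borel_measurable lborel"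
      by measurable
    show "(\<lambda>s. indicator {0..1} s *\<^sub>R (\<Sum>k\<in>?K. u (s + real_of_int k))) \<in> borel_measurable lborel"
      by measurable
    show "AE s in lborel. (\<Sum>k\<in>?K. indicator {0..<1} s * u (s + real_of_int k)) =
          indicator {0..1} s *\<^sub>R (\<Sum>k\<in>?K. u (s + real_of_int k))"
      using AE_lborel_singleton[of 1]
      by eventually_elim (auto simp: indicator_def sum_distrib_left[symmetric])
  qed
  finally show ?thesis by simp
qed




lemma absN: "1 \<le> (N::real) \<Longrightarrow> \<bar>N * x\<bar> \<le> c \<Longrightarrow> \<bar>x\<bar> \<le> c"
proof -
  assume a: "1 \<le> N" "\<bar>N * x\<bar> \<le> c"
  have "\<bar>x\<bar> \<le> N * \<bar>x\<bar>" using a(1) by (simp add: mult_le_cancel_right1)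
  also have "\<dots> = \<bar>N * x\<bar>" using a(1) by (simp add: abs_mult)
  finally show ?thesis using a(2) by simp
qed

context fsupp begin

definition T :: "nat \<Rightarrow> real \<Rightarrow> real \<Rightarrow> real" where
  "T N b s = (\<Sum>\<^sub>\<infinity>k::int. f (real N * (b + real_of_int k + s)))"

lemma fN_nz: "1 \<le> N \<Longrightarrow> f (real N * x) \<noteq> 0 \<Longrightarrow> \<bar>x\<bar> \<le> R"
  using f_nz absN[of "real N" x R] by simp

lemma T_fin:
  assumes N: "1 \<le> N" and s: "\<bar>s\<bar> \<le> D" and B: "\<bar>b\<bar> + D + R \<le> real_of_int B"
  shows "T N b s = (\<Sum>k\<in>{-B..B}. f (real N * (b + real_of_int k + s)))"
  unfolding T_def
proof (subst infsum_cong_neutral[where T="{-B..B}" and g="\<lambda>k. f (real N * (b + real_of_int k + s))"])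
  fix k :: int assume "k \<in> UNIV - {-B..B}"
  then have "real_of_int B < \<bar>real_of_int k\<bar>" by auto
  show "f (real N * (b + real_of_int k + s)) = 0"
  proof (rule ccontr)
    assume "f (real N * (b + real_of_int k + s)) \<noteq> 0"
    then have "\<bar>b + real_of_int k + s\<bar> \<le> R" using fN_nz N by blast
    then show False using \<open>real_of_int B < \<bar>real_of_int k\<bar>\<close> s B by linarith
  qed
qed auto

lemma T_per: "T N b (s + real_of_int j) = T N b s"
proof -
  have "T N b s = (\<Sum>\<^sub>\<infinity>k::int. f (real N * (b + real_of_int (k + j) + s)))"
    unfolding T_def
    by (rule infsum_reindex_bij_betw[where g="\<lambda>k. k + j", symmetric])
       (rule bij_betwI[where g="\<lambda>k. k - j"], auto)
  then show ?thesis unfolding T_def by (simp add: algebra_simps)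
qed

end



context fsupp begin

lemma single_integral:
  assumes N: "1 \<le> N"
  shows "(LINT s|lborel. f (real N * (b1 + real_of_int k1 + s)) * f (real N * (b2 + real_of_int k2 + s)) * f (real N * (b3 + s)))
     = triple_F f (real N * (b1 - b2 + real_of_int (k1 - k2))) (real N * (b2 - b3 + real_of_int k2)) / real N"
proof -
  define z1 where "z1 = real N * (b1 - b2 + real_of_int (k1 - k2))"
  define z2 where "z2 = real N * (b2 - b3 + real_of_int k2)"
  have Npos: "real N \<noteq> 0" using N by simp
  have "triple_F f z1 z2 = \<bar>real N\<bar> *\<^sub>R (LINT x|lborel. f (real N * b3 + real N * x) * f (z1 + z2 + (real N * b3 + real N * x)) * f (z2 + (real N * b3 + real N * x)))"
    unfolding triple_F_def by (rule lborel_integral_real_affine[OF Npos])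
  also have "\<dots> = real N * (LINT s|lborel. f (real N * (b1 + real_of_int k1 + s)) * f (real N * (b2 + real_of_int k2 + s)) * f (real N * (b3 + s)))"
  proof -
    have "\<And>x. f (real N * b3 + real N * x) * f (z1 + z2 + (real N * b3 + real N * x)) * f (z2 + (real N * b3 + real N * x))
        = f (real N * (b1 + real_of_int k1 + x)) * f (real N * (b2 + real_of_int k2 + x)) * f (real N * (b3 + x))"
    proof -
      fix x
      have e1: "real N * b3 + real N * x = real N * (b3 + x)" by (simp add: algebra_simps)
      have e2: "z1 + z2 + real N * (b3 + x) = real N * (b1 + real_of_int k1 + x)"
        unfolding z1_def z2_def by (simp add: algebra_simps)
      have e3: "z2 + real N * (b3 + x) = real N * (b2 + real_of_int k2 + x)"
        unfolding z2_def by (simp add: algebra_simps)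
      show "?thesis x" by (simp only: e2 e3 e1) (simp only: mult_ac)
    qed
    then show ?thesis by simp
  qed
  finally show ?thesis using Npos unfolding z1_def[symmetric] z2_def[symmetric] by simp
qed

end



context fsupp begin

lemma fN_cont[continuous_intros]: "continuous_on UNIV (\<lambda>s. f (real N * (b + s)))"
  by (intro continuous_intros)

lemma triple_integral:
  assumes N: "1 \<le> N"
  shows "set_integrable lborel {0..1} (\<lambda>s. T N b1 s * T N b2 s * T N b3 s) \<and>
    (LINT s:{0..1}|lborel. T N b1 s * T N b2 s * T N b3 s) =
     (1 / real N) * infsum (\<lambda>(k1::int, k2::int). triple_F f (real N * (b1 - b2 + real_of_int k1))
                                                (real N * (b2 - b3 + real_of_int k2))) UNIV"
proof -
  define B :: int where "B = \<lceil>2*(\<bar>b1\<bar> + \<bar>b2\<bar> + \<bar>b3\<bar>) + 2*R\<rceil> + 1"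
  have B: "2*(\<bar>b1\<bar> + \<bar>b2\<bar> + \<bar>b3\<bar>) + 2*R + 1 \<le> real_of_int B" unfolding B_def by linarith
  have Bpos: "0 \<le> B"
  proof -
    have "0 \<le> real_of_int B" using B Rpos by (smt (verit) abs_ge_zero)
    then show ?thesis by simp
  qed
  let ?K = "{-B..B}"
  define P where "P b s = (\<Sum>k\<in>?K. f (real N * (b + real_of_int k + s)))" for b s
  have Pc[continuous_intros]: "continuous_on UNIV (P b)" for b
    unfolding P_def by (intro continuous_intros)
  define C where "C = \<bar>b3\<bar> + R"
  define v where "v s = P b1 s * P b2 s * f (real N * (b3 + s))" for s
  have cv: "continuous_on UNIV v" unfolding v_def by (intro continuous_intros)
  have f3z: "f (real N * (b3 + x)) = 0" if "C < \<bar>x\<bar>" for x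
  proof (rule ccontr)
    assume "f (real N * (b3 + x)) \<noteq> 0"
    then have "\<bar>b3 + x\<bar> \<le> R" using fN_nz N by blast
    then show False using that unfolding C_def by linarith
  qed
  have sv: "v x = 0" if "C < \<bar>x\<bar>" for x unfolding v_def using f3z[OF that] by simp
  have TP1: "T N b s = P b s" if "\<bar>s\<bar> \<le> 1" "b \<in> {b1,b2,b3}" for b s
    unfolding P_def by (rule T_fin[OF N that(1)]) (use B that(2) Rpos in auto)
  have TPC: "T N b s = P b s" if "\<bar>s\<bar> \<le> C" "b \<in> {b1,b2,b3}" for b s
    unfolding P_def by (rule T_fin[OF N that(1)]) (use B that(2) Rpos in \<open>auto simp: C_def\<close>)
  have int1: "set_integrable lborel {0..1} (\<lambda>s. T N b1 s * T N b2 s * T N b3 s)"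
    unfolding set_integrable_def
  proof (rule borel_integrable_compact)
    show "continuous_on {0..1} (\<lambda>s. T N b1 s * T N b2 s * T N b3 s)"
    proof (rule continuous_on_cong[THEN iffD1, OF refl _ continuous_on_subset[of UNIV "\<lambda>s. P b1 s * P b2 s * P b3 s"]])
      show "continuous_on UNIV (\<lambda>s. P b1 s * P b2 s * P b3 s)" by (intro continuous_intros)
    qed (auto simp: TP1)
  qed auto
  have per: "(LINT s:{0..1}|lborel. (\<Sum>j\<in>{-int (nat B)..int (nat B)}. v (s + real_of_int j))) = (LINT x|lborel. v x)"
    by (rule periodize[OF cv sv]) (use B Bpos Rpos in \<open>auto simp: C_def\<close>)
  have eq1: "(\<Sum>j\<in>?K. v (s + real_of_int j)) = T N b1 s * T N b2 s * T N b3 s" if s: "s \<in> {0..1}" for s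
  proof -
    have "v (s + real_of_int j) = T N b1 s * T N b2 s * f (real N * (b3 + real_of_int j + s))" for j
    proof (cases "f (real N * (b3 + (s + real_of_int j))) = 0")
      case True then show ?thesis unfolding v_def by (simp add: add_ac)
    next
      case False
      then have "\<bar>s + real_of_int j\<bar> \<le> C" using f3z by force
      then have "P b (s + real_of_int j) = T N b s" if "b \<in> {b1,b2,b3}" for b
        using TPC[OF _ that, of "s + real_of_int j"] T_per[of N b s j] by simp
      then show ?thesis unfolding v_def by (simp add: add_ac)
    qed
    then have "(\<Sum>j\<in>?K. v (s + real_of_int j)) = T N b1 s * T N b2 s * P b3 s"
      unfolding P_def by (simp add: sum_distrib_left)
    also have "\<dots> = T N b1 s * T N b2 s * T N b3 s" using TP1[of s b3] s by simp
    finally show ?thesis .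
  qed
  have "(LINT s:{0..1}|lborel. T N b1 s * T N b2 s * T N b3 s) = (LINT x|lborel. v x)"
    unfolding per[symmetric] using Bpos
    by (intro set_lebesgue_integral_cong) (auto simp: eq1)
  also have "\<dots> = (\<Sum>k1\<in>?K. \<Sum>k2\<in>?K. LINT s|lborel. f (real N * (b1 + real_of_int k1 + s)) * f (real N * (b2 + real_of_int k2 + s)) * f (real N * (b3 + s)))"
  proof -
    have ii: "integrable lborel (\<lambda>s. f (real N * (b1 + real_of_int k1 + s)) * f (real N * (b2 + real_of_int k2 + s)) * f (real N * (b3 + s)))" for k1 k2
      by (rule cs_integrable[where C=C]) (auto intro!: continuous_intros simp: f3z)
    have "(LINT x|lborel. v x) = (LINT s|lborel. (\<Sum>k1\<in>?K. \<Sum>k2\<in>?K. f (real N * (b1 + real_of_int k1 + s)) * f (real N * (b2 + real_of_int k2 + s)) * f (real N * (b3 + s))))"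
    proof -
      have "v x = (\<Sum>k1\<in>?K. \<Sum>k2\<in>?K. f (real N * (b1 + real_of_int k1 + x)) * f (real N * (b2 + real_of_int k2 + x)) * f (real N * (b3 + x)))" for x
        unfolding v_def P_def sum_product by (simp only: sum_distrib_right)
      then show ?thesis by simp
    qed
    also have "\<dots> = (\<Sum>k1\<in>?K. LINT s|lborel. (\<Sum>k2\<in>?K. f (real N * (b1 + real_of_int k1 + s)) * f (real N * (b2 + real_of_int k2 + s)) * f (real N * (b3 + s))))"
      by (rule Bochner_Integration.integral_sum) (use ii in auto)
    also have "\<dots> = (\<Sum>k1\<in>?K. \<Sum>k2\<in>?K. LINT s|lborel. f (real N * (b1 + real_of_int k1 + s)) * f (real N * (b2 + real_of_int k2 + s)) * f (real N * (b3 + s)))"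
      by (rule sum.cong[OF refl], rule Bochner_Integration.integral_sum) (use ii in auto)
    finally show ?thesis .
  qed
  also have "\<dots> = (\<Sum>k1\<in>?K. \<Sum>k2\<in>?K. triple_F f (real N * (b1 - b2 + real_of_int (k1 - k2))) (real N * (b2 - b3 + real_of_int k2)) / real N)"
    using single_integral[OF N] by simp
  also have "\<dots> = (1 / real N) * infsum (\<lambda>(k1::int, k2::int). triple_F f (real N * (b1 - b2 + real_of_int k1))
                                                (real N * (b2 - b3 + real_of_int k2))) UNIV"
  proof -
    define G where "G = (\<lambda>(k1::int, k2::int). triple_F f (real N * (b1 - b2 + real_of_int k1))
                                                (real N * (b2 - b3 + real_of_int k2)))"
    define h where "h = (\<lambda>(k1::int, k2::int). (k1 - k2, k2))"
    have "infsum G UNIV = infsum (\<lambda>x. G (h x)) UNIV"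
      by (rule infsum_reindex_bij_betw[symmetric])
         (rule bij_betwI[where g="\<lambda>(j1, j2). (j1 + j2, j2)"], auto simp: h_def)
    also have "\<dots> = infsum (\<lambda>x. G (h x)) (?K \<times> ?K)"
    proof (rule infsum_cong_neutral)
      fix x assume x: "x \<in> UNIV - ?K \<times> ?K"
      obtain k1 k2 where xk: "x = (k1, k2)" by (cases x)
      show "G (h x) = 0"
      proof (rule ccontr)
        assume "G (h x) \<noteq> 0"
        then have nz: "triple_F f (real N * (b1 - b2 + real_of_int (k1 - k2))) (real N * (b2 - b3 + real_of_int k2)) \<noteq> 0"
          unfolding G_def h_def xk by simp
        from F_nz[OF nz] have A: "\<bar>real N * (b2 - b3 + real_of_int k2)\<bar> \<le> 2*R"
          and A2: "\<bar>real N * (b1 - b2 + real_of_int (k1 - k2)) + real N * (b2 - b3 + real_of_int k2)\<bar> \<le> 2*R"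
          by auto
        have "real N * (b1 - b2 + real_of_int (k1 - k2)) + real N * (b2 - b3 + real_of_int k2) = real N * (b1 - b3 + real_of_int k1)"
          by (simp add: algebra_simps)
        with A2 have A3: "\<bar>b1 - b3 + real_of_int k1\<bar> \<le> 2*R" using absN[of "real N"] N by simp
        have A4: "\<bar>b2 - b3 + real_of_int k2\<bar> \<le> 2*R" using A absN[of "real N"] N by simp
        have "k1 \<in> ?K" "k2 \<in> ?K" using A3 A4 B by auto
        then show False using x xk by auto
      qed
    qed auto
    also have "\<dots> = (\<Sum>k1\<in>?K. \<Sum>k2\<in>?K. G (h (k1, k2)))"
      by (simp add: sum.cartesian_product)
    finally have "infsum G UNIV = (\<Sum>k1\<in>?K. \<Sum>k2\<in>?K. G (h (k1, k2)))" .
    then show ?thesis unfolding G_def[symmetric]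
      by (simp add: G_def h_def sum_divide_distrib)
  qed
  finally show ?thesis using int1 by simp
qed

end



lemma infsum_range:
  assumes "inj e" "\<And>x. x \<notin> range e \<Longrightarrow> G x = 0"
  shows "infsum G UNIV = infsum (\<lambda>j. G (e j)) UNIV"
proof -
  have "infsum G UNIV = infsum G (range e)"
    by (rule infsum_cong_neutral) (use assms in auto)
  also have "\<dots> = infsum (\<lambda>j. G (e j)) UNIV"
    by (rule infsum_reindex_bij_betw[symmetric]) (use assms(1) in \<open>simp add: bij_betw_def\<close>)
  finally show ?thesis .
qed

lemma absNj: "j \<noteq> 0 \<Longrightarrow> real N \<le> \<bar>real N * real_of_int j\<bar>"
proof -
  assume "j \<noteq> 0"
  then have "1 \<le> \<bar>real_of_int j\<bar>" by linarith
  then have "real N * 1 \<le> real N * \<bar>real_of_int j\<bar>" by (intro mult_left_mono) auto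
  then show ?thesis by (simp add: abs_mult)
qed

lemma cube_sum: "(sum h A)^3 = (\<Sum>i\<in>A. \<Sum>j\<in>A. \<Sum>k\<in>A. h i * h j * (h k::real))"
proof -
  have "(sum h A)^3 = (sum h A * sum h A) * sum h A" by (simp add: power3_eq_cube)
  also have "\<dots> = (\<Sum>i\<in>A. \<Sum>j\<in>A. h i * h j) * sum h A" by (simp only: sum_product)
  also have "\<dots> = (\<Sum>i\<in>A. \<Sum>j\<in>A. h i * h j * sum h A)" by (simp only: sum_distrib_right)
  also have "\<dots> = (\<Sum>i\<in>A. \<Sum>j\<in>A. \<Sum>k\<in>A. h i * h j * h k)" by (simp only: sum_distrib_left)
  finally show ?thesis .
qed

lemma set_integral_sum3:
  fixes H :: "'i \<Rightarrow> 'j \<Rightarrow> 'k \<Rightarrow> 'a \<Rightarrow> real"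
  assumes "\<And>i j k. set_integrable M A (H i j k)"
  shows "(LINT s:A|M. (\<Sum>i\<in>I. \<Sum>j\<in>J. \<Sum>k\<in>K. H i j k s)) = (\<Sum>i\<in>I. \<Sum>j\<in>J. \<Sum>k\<in>K. (LINT s:A|M. H i j k s))"
proof -
  have ii: "integrable M (\<lambda>s. indicator A s *\<^sub>R H i j k s)" for i j k
    using assms unfolding set_integrable_def by auto
  have "(LINT s:A|M. (\<Sum>i\<in>I. \<Sum>j\<in>J. \<Sum>k\<in>K. H i j k s)) = 
     (LINT s|M. (\<Sum>i\<in>I. \<Sum>j\<in>J. \<Sum>k\<in>K. indicator A s *\<^sub>R H i j k s))"
    unfolding set_lebesgue_integral_def by (simp only: scaleR_sum_right)
  also have "\<dots> = (\<Sum>i\<in>I. LINT s|M. (\<Sum>j\<in>J. \<Sum>k\<in>K. indicator A s *\<^sub>R H i j k s))"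
    by (rule Bochner_Integration.integral_sum) (intro Bochner_Integration.integrable_sum ii)
  also have "\<dots> = (\<Sum>i\<in>I. \<Sum>j\<in>J. LINT s|M. (\<Sum>k\<in>K. indicator A s *\<^sub>R H i j k s))"
    by (intro sum.cong refl Bochner_Integration.integral_sum Bochner_Integration.integrable_sum ii)
  also have "\<dots> = (\<Sum>i\<in>I. \<Sum>j\<in>J. \<Sum>k\<in>K. LINT s|M. indicator A s *\<^sub>R H i j k s)"
    by (intro sum.cong refl Bochner_Integration.integral_sum Bochner_Integration.integrable_sum ii)
  finally show ?thesis unfolding set_lebesgue_integral_def .
qed

context fsupp begin

definition Q :: "nat \<Rightarrow> real \<Rightarrow> real \<Rightarrow> real \<Rightarrow> real" where
  "Q N b1 b2 b3 = infsum (\<lambda>(k1::int, k2::int). triple_F f (real N * (b1 - b2 + real_of_int k1))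
                                                (real N * (b2 - b3 + real_of_int k2))) UNIV"

definition g :: "real \<Rightarrow> real" where "g z = triple_F f z 0"

definition Pg :: "nat \<Rightarrow> real \<Rightarrow> real \<Rightarrow> real" where
  "Pg N b1 b2 = infsum (\<lambda>k::int. g (real N * (b1 - b2 + real_of_int k))) UNIV"

lemma F_0z: "triple_F f 0 z = g (-z)"
proof -
  have "g (-z) = \<bar>1\<bar> *\<^sub>R (LINT x|lborel. f (z + 1 * x) * f (-z + 0 + (z + 1 * x)) * f (0 + (z + 1 * x)))"
    unfolding g_def triple_F_def by (rule lborel_integral_real_affine) simp
  also have "\<dots> = triple_F f 0 z" unfolding triple_F_def by (simp add: mult_ac)
  finally show ?thesis by simp
qed

lemma F_zmz: "triple_F f z (-z) = g (-z)"
  unfolding g_def triple_F_def by (simp add: mult_ac)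

lemma Pg_neg: "infsum (\<lambda>k::int. g (- (real N * (b1 - b2 + real_of_int k)))) UNIV = Pg N b2 b1"
proof -
  have "Pg N b2 b1 = infsum (\<lambda>k::int. g (real N * (b2 - b1 + real_of_int (- k)))) UNIV"
    unfolding Pg_def by (rule infsum_reindex_bij_betw[symmetric]) (rule bij_betwI[where g=uminus], auto)
  then show ?thesis by (simp add: algebra_simps)
qed

lemma M3_formula:
  assumes N: "1 \<le> N"
  shows "M3 y f N = (1 / real N) * (\<Sum>n1\<in>{1..N}. \<Sum>n2\<in>{1..N}. \<Sum>n3\<in>{1..N}. Q N (y n1) (y n2) (y n3))"
proof -
  have S: "S_N y f N s = (\<Sum>n\<in>{1..N}. T N (y n) s)" for s unfolding S_N_def T_def by simp
  have "(S_N y f N s) ^ 3 = (\<Sum>n1\<in>{1..N}. \<Sum>n2\<in>{1..N}. \<Sum>n3\<in>{1..N}. T N (y n1) s * T N (y n2) s * T N (y n3) s)" for s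
    unfolding S by (rule cube_sum)
  then have "M3 y f N = (LINT s:{0..1}|lborel. (\<Sum>n1\<in>{1..N}. \<Sum>n2\<in>{1..N}. \<Sum>n3\<in>{1..N}. T N (y n1) s * T N (y n2) s * T N (y n3) s))"
    unfolding M3_def by simp
  also have "\<dots> = (\<Sum>n1\<in>{1..N}. \<Sum>n2\<in>{1..N}. \<Sum>n3\<in>{1..N}. LINT s:{0..1}|lborel. T N (y n1) s * T N (y n2) s * T N (y n3) s)"
    by (rule set_integral_sum3) (use triple_integral[OF N] in auto)
  also have "\<dots> = (\<Sum>n1\<in>{1..N}. \<Sum>n2\<in>{1..N}. \<Sum>n3\<in>{1..N}. (1 / real N) * Q N (y n1) (y n2) (y n3))"
    using triple_integral[OF N] unfolding Q_def by simp
  finally show ?thesis by (simp add: sum_distrib_left)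
qed

end



context fsupp begin

lemma Q_a:
  assumes N: "2 * R < real N"
  shows "Q N b b b = Eint (\<lambda>x. f x ^ 3)"
proof -
  have "Q N b b b = infsum (\<lambda>(k1::int, k2::int). triple_F f (real N * real_of_int k1) (real N * real_of_int k2)) {(0,0)}"
    unfolding Q_def
  proof (rule infsum_cong_neutral)
    fix x :: "int \<times> int" assume x: "x \<in> UNIV - {(0,0)}"
    obtain j1 j2 where xj: "x = (j1, j2)" by (cases x)
    show "(case x of (k1, k2) \<Rightarrow> triple_F f (real N * (b - b + real_of_int k1)) (real N * (b - b + real_of_int k2))) = 0"
    proof (rule ccontr)
      assume "\<not> ?thesis"
      then have "triple_F f (real N * real_of_int j1) (real N * real_of_int j2) \<noteq> 0" using xj by simp
      from F_nz[OF this] have "\<bar>real N * real_of_int j1\<bar> \<le> 2*R" "\<bar>real N * real_of_int j2\<bar> \<le> 2*R" by auto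
      moreover have "j1 \<noteq> 0 \<or> j2 \<noteq> 0" using x xj by auto
      ultimately show False using absNj[of j1 N] absNj[of j2 N] N by auto
    qed
  qed auto
  also have "\<dots> = triple_F f 0 0" by simp
  also have "\<dots> = Eint (\<lambda>x. f x ^ 3)" unfolding triple_F_def Eint_def by (simp add: power3_eq_cube)
  finally show ?thesis .
qed

lemma Q_b:
  assumes N: "2 * R < real N"
  shows "Q N b b c = Pg N c b"
proof -
  have "Q N b b c = infsum (\<lambda>j::int. triple_F f 0 (real N * (b - c + real_of_int j))) UNIV"
    unfolding Q_def
  proof (subst infsum_range[where e="\<lambda>j. (0, j)"])
    fix x :: "int \<times> int" assume x: "x \<notin> range (\<lambda>j. (0, j))"
    obtain j1 j2 where xj: "x = (j1, j2)" by (cases x)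
    show "(case x of (k1, k2) \<Rightarrow> triple_F f (real N * (b - b + real_of_int k1)) (real N * (b - c + real_of_int k2))) = 0"
    proof (rule ccontr)
      assume "\<not> ?thesis"
      then have "triple_F f (real N * real_of_int j1) (real N * (b - c + real_of_int j2)) \<noteq> 0" using xj by simp
      from F_nz[OF this] have "\<bar>real N * real_of_int j1\<bar> \<le> 2*R" by auto
      moreover have "j1 \<noteq> 0" using x xj by auto
      ultimately show False using absNj[of j1 N] N by auto
    qed
  qed (auto simp: inj_def)
  also have "\<dots> = Pg N c b" unfolding F_0z Pg_neg[symmetric] ..
  finally show ?thesis .
qed

lemma Q_c:
  assumes N: "2 * R < real N"
  shows "Q N c b b = Pg N c b"
proof -
  have "Q N c b b = infsum (\<lambda>j::int. triple_F f (real N * (c - b + real_of_int j)) 0) UNIV"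
    unfolding Q_def
  proof (subst infsum_range[where e="\<lambda>j. (j, 0)"])
    fix x :: "int \<times> int" assume x: "x \<notin> range (\<lambda>j. (j, 0))"
    obtain j1 j2 where xj: "x = (j1, j2)" by (cases x)
    show "(case x of (k1, k2) \<Rightarrow> triple_F f (real N * (c - b + real_of_int k1)) (real N * (b - b + real_of_int k2))) = 0"
    proof (rule ccontr)
      assume "\<not> ?thesis"
      then have "triple_F f (real N * (c - b + real_of_int j1)) (real N * real_of_int j2) \<noteq> 0" using xj by simp
      from F_nz[OF this] have "\<bar>real N * real_of_int j2\<bar> \<le> 2*R" by auto
      moreover have "j2 \<noteq> 0" using x xj by auto
      ultimately show False using absNj[of j2 N] N by auto
    qed
  qed (auto simp: inj_def)
  also have "\<dots> = Pg N c b" unfolding Pg_def g_def ..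
  finally show ?thesis .
qed

lemma Q_d:
  assumes N: "2 * R < real N"
  shows "Q N c b c = Pg N b c"
proof -
  have "Q N c b c = infsum (\<lambda>j::int. triple_F f (real N * (c - b + real_of_int j)) (- (real N * (c - b + real_of_int j)))) UNIV"
    unfolding Q_def
  proof (subst infsum_range[where e="\<lambda>j. (j, -j)"])
    fix x :: "int \<times> int" assume x: "x \<notin> range (\<lambda>j. (j, -j))"
    obtain j1 j2 where xj: "x = (j1, j2)" by (cases x)
    show "(case x of (k1, k2) \<Rightarrow> triple_F f (real N * (c - b + real_of_int k1)) (real N * (b - c + real_of_int k2))) = 0"
    proof (rule ccontr)
      assume "\<not> ?thesis"
      then have "triple_F f (real N * (c - b + real_of_int j1)) (real N * (b - c + real_of_int j2)) \<noteq> 0" using xj by simp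
      from F_nz[OF this] have "\<bar>real N * (c - b + real_of_int j1) + real N * (b - c + real_of_int j2)\<bar> \<le> 2*R" by auto
      moreover have "real N * (c - b + real_of_int j1) + real N * (b - c + real_of_int j2) = real N * real_of_int (j1 + j2)"
        by (simp add: algebra_simps)
      moreover have "j1 + j2 \<noteq> 0" using x xj by (auto simp: image_iff) 
      ultimately show False using absNj[of "j1+j2" N] N by auto
    qed
  next
    show "(\<Sum>\<^sub>\<infinity>j. case (j, - j) of (k1, k2) \<Rightarrow> triple_F f (real N * (c - b + real_of_int k1)) (real N * (b - c + real_of_int k2))) =
      (\<Sum>\<^sub>\<infinity>j. triple_F f (real N * (c - b + real_of_int j)) (- (real N * (c - b + real_of_int j))))"
      by (simp add: algebra_simps)
  qed (auto simp: inj_def)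
  also have "\<dots> = Pg N b c" unfolding F_zmz Pg_neg ..
  finally show ?thesis .
qed

end



lemma sum_nested3: "finite A \<Longrightarrow> (\<Sum>x\<in>A \<times> A \<times> A. h x) = (\<Sum>a\<in>A. \<Sum>b\<in>A. \<Sum>c\<in>A. h (a, b, c))"
  by (simp add: sum.cartesian_product)

lemma sum_minus_if: assumes "finite A" shows "(\<Sum>b\<in>A - {a}. h b) = (\<Sum>b\<in>A. if a \<noteq> b then h b else (0::real))"
proof -
  have "(\<Sum>b\<in>A. if a \<noteq> b then h b else (0::real)) = (\<Sum>b\<in>A - {a}. if a \<noteq> b then h b else 0)"
    by (rule sum.mono_neutral_right) (use assms in auto)
  also have "\<dots> = (\<Sum>b\<in>A - {a}. h b)" by (rule sum.cong) auto
  finally show ?thesis by simp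
qed

context fsupp begin

lemma decomposition:
  assumes N: "2 * R < real N" "1 \<le> N"
  shows "M3 y f N = triple_corr y f N + 3 * pair_corr y g N + Eint (\<lambda>x. f x ^ 3)"
proof -
  let ?A = "{1..N}"
  let ?E = "Eint (\<lambda>x. f x ^ 3)"
  define X where "X a b = Pg N (y a) (y b)" for a b
  define W where "W = (\<Sum>a\<in>?A. \<Sum>b\<in>?A. if a \<noteq> b then X a b else 0)"
  have pw: "Q N (y n1) (y n2) (y n3) =
      (if n1 \<noteq> n2 \<and> n1 \<noteq> n3 \<and> n2 \<noteq> n3 then Q N (y n1) (y n2) (y n3) else 0)
    + (if n1 = n2 \<and> n1 \<noteq> n3 then X n3 n1 else 0)
    + (if n2 = n3 \<and> n1 \<noteq> n2 then X n1 n2 else 0)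
    + (if n1 = n3 \<and> n1 \<noteq> n2 then X n2 n1 else 0)
    + (if n1 = n2 \<and> n2 = n3 then ?E else 0)" for n1 n2 n3
    by (cases "n1 = n2"; cases "n2 = n3"; cases "n1 = n3")
       (simp_all add: X_def Q_a[OF N(1)] Q_b[OF N(1)] Q_c[OF N(1)] Q_d[OF N(1)])
  have S1: "(\<Sum>n1\<in>?A. \<Sum>n2\<in>?A. \<Sum>n3\<in>?A. if n1 \<noteq> n2 \<and> n1 \<noteq> n3 \<and> n2 \<noteq> n3 then Q N (y n1) (y n2) (y n3) else 0)
      = real N * triple_corr y f N"
  proof -
    define P where "P = (\<lambda>(n1::nat, n2::nat, n3::nat). n1 \<noteq> n2 \<and> n1 \<noteq> n3 \<and> n2 \<noteq> n3)"
    define hh where "hh = (\<lambda>(n1::nat, n2::nat, n3::nat). Q N (y n1) (y n2) (y n3))"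
    have Dt: "distinct_triples N = {x \<in> ?A \<times> ?A \<times> ?A. P x}"
      unfolding distinct_triples_def P_def by auto
    have "triple_corr y f N = (1 / real N) * (\<Sum>x\<in>distinct_triples N. hh x)"
      unfolding triple_corr_def Q_def hh_def by (rule refl)
    then have "real N * triple_corr y f N = (\<Sum>x\<in>distinct_triples N. hh x)"
      using N by simp
    also have "\<dots> = (\<Sum>a\<in>?A. \<Sum>b\<in>?A. \<Sum>c\<in>?A. if P (a, b, c) then hh (a, b, c) else 0)"
      unfolding Dt by (simp only: sum.inter_filter[OF finite_cartesian_product[OF finite_atLeastAtMost finite_cartesian_product[OF finite_atLeastAtMost finite_atLeastAtMost]]] sum_nested3[OF finite_atLeastAtMost])
    also have "\<dots> = (\<Sum>n1\<in>?A. \<Sum>n2\<in>?A. \<Sum>n3\<in>?A. if n1 \<noteq> n2 \<and> n1 \<noteq> n3 \<and> n2 \<noteq> n3 then Q N (y n1) (y n2) (y n3) else 0)"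
      unfolding P_def hh_def by (simp only: prod.case)
    finally show ?thesis by simp
  qed
  have S2: "(\<Sum>n1\<in>?A. \<Sum>n2\<in>?A. \<Sum>n3\<in>?A. if n1 = n2 \<and> n1 \<noteq> n3 then X n3 n1 else 0) = W"
  proof -
    have "(\<Sum>n1\<in>?A. \<Sum>n2\<in>?A. \<Sum>n3\<in>?A. if n1 = n2 \<and> n1 \<noteq> n3 then X n3 n1 else 0)
       = (\<Sum>n1\<in>?A. \<Sum>n2\<in>?A. if n1 = n2 then (\<Sum>n3\<in>?A. if n1 \<noteq> n3 then X n3 n1 else 0) else 0)"
      by (intro sum.cong refl) auto
    also have "\<dots> = (\<Sum>n1\<in>?A. \<Sum>n3\<in>?A. if n1 \<noteq> n3 then X n3 n1 else 0)"
      by (simp add: sum.delta)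
    also have "\<dots> = W" unfolding W_def by (subst sum.swap) (intro sum.cong refl, auto)
    finally show ?thesis .
  qed
  have S3: "(\<Sum>n1\<in>?A. \<Sum>n2\<in>?A. \<Sum>n3\<in>?A. if n2 = n3 \<and> n1 \<noteq> n2 then X n1 n2 else 0) = W"
  proof -
    have "(\<Sum>n1\<in>?A. \<Sum>n2\<in>?A. \<Sum>n3\<in>?A. if n2 = n3 \<and> n1 \<noteq> n2 then X n1 n2 else 0)
       = (\<Sum>n1\<in>?A. \<Sum>n2\<in>?A. \<Sum>n3\<in>?A. if n2 = n3 then (if n1 \<noteq> n2 then X n1 n2 else 0) else 0)"
      by (intro sum.cong refl) auto
    also have "\<dots> = W" unfolding W_def by (simp add: sum.delta)
    finally show ?thesis .
  qed
  have S4: "(\<Sum>n1\<in>?A. \<Sum>n2\<in>?A. \<Sum>n3\<in>?A. if n1 = n3 \<and> n1 \<noteq> n2 then X n2 n1 else 0) = W"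
  proof -
    have "(\<Sum>n1\<in>?A. \<Sum>n2\<in>?A. \<Sum>n3\<in>?A. if n1 = n3 \<and> n1 \<noteq> n2 then X n2 n1 else 0)
       = (\<Sum>n1\<in>?A. \<Sum>n2\<in>?A. \<Sum>n3\<in>?A. if n1 = n3 then (if n1 \<noteq> n2 then X n2 n1 else 0) else 0)"
      by (intro sum.cong refl) auto
    also have "\<dots> = (\<Sum>n1\<in>?A. \<Sum>n2\<in>?A. if n1 \<noteq> n2 then X n2 n1 else 0)" by (simp add: sum.delta')
    also have "\<dots> = W" unfolding W_def by (subst sum.swap) (intro sum.cong refl, auto)
    finally show ?thesis .
  qed
  have S5: "(\<Sum>n1\<in>?A. \<Sum>n2\<in>?A. \<Sum>n3\<in>?A. if n1 = n2 \<and> n2 = n3 then ?E else 0) = real N * ?E"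
  proof -
    have "(\<Sum>n1\<in>?A. \<Sum>n2\<in>?A. \<Sum>n3\<in>?A. if n1 = n2 \<and> n2 = n3 then ?E else 0)
       = (\<Sum>n1\<in>?A. \<Sum>n2\<in>?A. if n1 = n2 then (\<Sum>n3\<in>?A. if n2 = n3 then ?E else 0) else 0)"
      by (intro sum.cong refl) auto
    also have "\<dots> = (\<Sum>n1\<in>?A. ?E)" by (simp add: sum.delta')
    finally show ?thesis by simp
  qed
  have PC: "real N * pair_corr y g N = W"
    using N unfolding pair_corr_def W_def X_def Pg_def by (simp add: sum_minus_if)
  have "M3 y f N = (1 / real N) * (\<Sum>n1\<in>?A. \<Sum>n2\<in>?A. \<Sum>n3\<in>?A. Q N (y n1) (y n2) (y n3))"
    using M3_formula N by simp
  also have "(\<Sum>n1\<in>?A. \<Sum>n2\<in>?A. \<Sum>n3\<in>?A. Q N (y n1) (y n2) (y n3)) =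
     real N * triple_corr y f N + W + W + W + real N * ?E"
    apply (subst sum.cong[OF refl sum.cong[OF refl sum.cong[OF refl pw]]])
    apply (simp only: sum.distrib S1 S2 S3 S4 S5)
    done
  finally have "real N * M3 y f N = real N * (triple_corr y f N + 3 * pair_corr y g N + ?E)"
    using N PC by (simp add: field_simps)
  then show ?thesis using N by simp
qed

end



context fsupp begin

lemma g_smooth:
  assumes sm: "\<And>k x. ((deriv ^^ k) f) differentiable (at x)"
  shows "smooth_cc g"
proof -
  define fk where "fk k = (deriv ^^ k) f" for k
  have fk0: "fk 0 = f" unfolding fk_def by simp
  have dfk: "DERIV (fk k) x :> fk (Suc k) x" for k x
  proof -
    have "fk (Suc k) = deriv (fk k)" unfolding fk_def by simp
    then show ?thesis using sm[of k x] DERIV_deriv_iff_real_differentiable unfolding fk_def by metis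
  qed
  have cfk: "continuous_on UNIV (fk k)" for k
    by (rule differentiable_imp_continuous_on) (use sm in \<open>auto simp: fk_def differentiable_at_imp_differentiable_on\<close>)
  have cfk'[continuous_intros]: "continuous_on S h \<Longrightarrow> continuous_on S (\<lambda>x. fk k (h x))" for S h k
    by (rule continuous_on_compose2[OF cfk]) auto
  have opn: "open {x::real. R < \<bar>x\<bar>}"
    by (rule open_Collect_less) (auto intro: continuous_intros)
  have sfk: "fk k x = 0" if "R < \<bar>x\<bar>" for k x
    using that
  proof (induction k arbitrary: x)
    case 0 then show ?case using supp fk0 by simp
  next
    case (Suc k)
    have "DERIV (fk k) x :> 0"
      by (rule has_field_derivative_transform_within_open[OF DERIV_const[of 0 "at x"] opn])
         (use Suc in auto)
    with dfk[of k x] show ?case by (rule DERIV_unique)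
  qed
  define D where "D k z = (LINT s|lborel. f s * fk k (z + s) * f s)" for k z
  have DI: "D k z = integral (cbox (-R) R) (\<lambda>s. f s * fk k (z + s) * f s)" for k z
  proof -
    let ?h = "\<lambda>s. f s * fk k (z + s) * f s"
    have ch: "continuous_on UNIV ?h" by (intro continuous_intros)
    have zh: "?h s = 0" if "R < \<bar>s\<bar>" for s using supp[OF that] by simp
    have "D k z = integral UNIV ?h" unfolding D_def
      by (rule integral_lborel[symmetric], rule cs_integrable[OF ch zh])
    also have "\<dots> = integral UNIV (\<lambda>s. if s \<in> cbox (-R) R then ?h s else 0)"
    proof (rule arg_cong[where f="integral UNIV"], rule ext)
      fix s show "?h s = (if s \<in> cbox (-R) R then ?h s else 0)"
        using zh[of s] by (cases "R < \<bar>s\<bar>") (auto simp: abs_le_iff)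
    qed
    also have "\<dots> = integral (cbox (-R) R) ?h" by (rule integral_restrict_UNIV)
    finally show ?thesis .
  qed
  have Dd: "DERIV (D k) z :> D (Suc k) z" for k z
  proof -
    have "((\<lambda>z. integral (cbox (-R) R) (\<lambda>s. f s * fk k (z + s) * f s)) has_field_derivative
          integral (cbox (-R) R) (\<lambda>s. f s * fk (Suc k) (z + s) * f s)) (at z within UNIV)"
    proof (rule leibniz_rule_field_derivative[where fx="\<lambda>z s. f s * fk (Suc k) (z + s) * f s"])
      fix x t :: real
      have "((\<lambda>x. fk k (x + t)) has_field_derivative fk (Suc k) (x + t)) (at x)"
        using dfk[of k "x + t"] DERIV_shift by blast
      then have "((\<lambda>x. f t * fk k (x + t) * f t) has_field_derivative f t * fk (Suc k) (x + t) * f t) (at x)"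
        by (intro DERIV_cmult DERIV_cmult_right)
      then show "((\<lambda>x. f t * fk k (x + t) * f t) has_field_derivative f t * fk (Suc k) (x + t) * f t) (at x within UNIV)"
        by simp
    next
      fix x :: real
      show "(\<lambda>s. f s * fk k (x + s) * f s) integrable_on cbox (- R) R"
        by (rule integrable_continuous) (intro continuous_intros)
    next
      have "continuous_on UNIV (\<lambda>p::real\<times>real. f (snd p) * fk (Suc k) (fst p + snd p) * f (snd p))"
        by (intro continuous_intros)
      then show "continuous_on (UNIV \<times> cbox (- R) R) (\<lambda>(x, t). f t * fk (Suc k) (x + t) * f t)"
        by (rule continuous_on_subset[THEN continuous_on_cong[THEN iffD1, rotated -1]]) auto
    qed auto
    then show ?thesis unfolding DI[abs_def, symmetric] DI[symmetric] by simp
  qed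
  have dD: "(deriv ^^ k) g = D k" for k
  proof (induction k)
    case 0
    show ?case unfolding D_def fk0 by (auto simp: g_def triple_F_def mult_ac)
  next
    case (Suc k)
    have "(deriv ^^ Suc k) g = deriv (D k)" using Suc by simp
    also have "\<dots> = D (Suc k)" using Dd DERIV_imp_deriv by blast
    finally show ?case .
  qed
  have diff: "((deriv ^^ k) g) differentiable (at x)" for k x
    unfolding dD DERIV_deriv_iff_real_differentiable[symmetric]
    using Dd[of k x] DERIV_imp_deriv[OF Dd[of k x]] by simp
  have gz: "g z = 0" if "2 * R < \<bar>z\<bar>" for z
    using F_nz[of z 0] that unfolding g_def by force
  have "closure {x. g x \<noteq> 0} \<subseteq> {-2*R..2*R}"
    by (rule closure_minimal) (use gz in \<open>force simp: abs_le_iff\<close>)+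
  then have "compact (closure {x. g x \<noteq> 0})"
    unfolding compact_eq_bounded_closed
    using bounded_subset[OF compact_imp_bounded[OF compact_Icc]] by auto
  then show ?thesis unfolding smooth_cc_def using diff by blast
qed

end



context fsupp begin

lemma g_int: "Eint g = Eint f * Eint (\<lambda>x. f x ^ 2)"
proof -
  define h where "h s z = f s * f (z + s) * f s" for s z
  have gz: "g z = (LINT s|lborel. h s z)" for z unfolding g_def triple_F_def h_def by (simp add: mult_ac)
  have ih: "integrable (lborel \<Otimes>\<^sub>M lborel) (case_prod h)"
    unfolding lborel_prod
  proof -
    let ?S = "{-R..R} \<times> {-2*R..2*R}"
    have "integrable lborel (\<lambda>p. indicator ?S p *\<^sub>R case_prod h p)"
    proof (rule borel_integrable_compact)
      show "compact ?S" by (intro compact_Times compact_Icc)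
      have "continuous_on UNIV (\<lambda>p::real\<times>real. f (fst p) * f (snd p + fst p) * f (fst p))"
        by (intro continuous_intros)
      then show "continuous_on ?S (case_prod h)"
        unfolding h_def by (rule continuous_on_subset[THEN continuous_on_cong[THEN iffD1, rotated -1]]) auto
    qed
    moreover have "(\<lambda>p. indicator ?S p *\<^sub>R case_prod h p) = case_prod h"
    proof (rule ext, clarify)
      fix s z :: real
      show "indicator ?S (s, z) *\<^sub>R h s z = h s z"
      proof (cases "h s z = 0")
        case False
        then have "f s \<noteq> 0" "f (z + s) \<noteq> 0" unfolding h_def by auto
        then have "\<bar>s\<bar> \<le> R" "\<bar>z + s\<bar> \<le> R" using f_nz by auto
        then have "(s, z) \<in> ?S" by (auto simp: abs_le_iff)
        then show ?thesis by simp
      qed simp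
    qed
    ultimately show "integrable lborel (case_prod h)" by simp
  qed
  have "Eint g = (LINT z|lborel. LINT s|lborel. h s z)" unfolding Eint_def gz ..
  also have "\<dots> = (LINT s|lborel. LINT z|lborel. h s z)"
    by (rule lborel_pair.Fubini_integral[OF ih])
  also have "\<dots> = (LINT s|lborel. f s ^ 2 * Eint f)"
  proof (rule Bochner_Integration.integral_cong[OF refl])
    fix s
    have "Eint f = \<bar>1\<bar> *\<^sub>R (LINT z|lborel. f (s + 1 * z))"
      unfolding Eint_def by (rule lborel_integral_real_affine) simp
    then have e: "(LINT z|lborel. f (z + s)) = Eint f" by (simp add: add.commute)
    have "(LINT z|lborel. h s z) = (LINT z|lborel. (f s * f s) * f (z + s))"
      unfolding h_def by (simp add: mult_ac)
    also have "\<dots> = (f s * f s) * (LINT z|lborel. f (z + s))" by simp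
    finally show "(LINT z|lborel. h s z) = f s ^ 2 * Eint f" using e by (simp add: power2_eq_square)
  qed
  also have "\<dots> = Eint f * Eint (\<lambda>x. f x ^ 2)" unfolding Eint_def by (simp add: mult.commute)
  finally show ?thesis .
qed

end

theorem mainTheorem2:
  fixes y :: "nat \<Rightarrow> real" and f :: "real \<Rightarrow> real"
  assumes ypos: "\<And>n. n \<ge> 1 \<Longrightarrow> y n > 0"
    and ppc: "\<And>g. smooth_cc g \<Longrightarrow> (\<lambda>N. pair_corr y g N) \<longlonglongrightarrow> Eint g"
    and f: "smooth_cc f"
  shows "((\<lambda>N. triple_corr y f N) \<longlonglongrightarrow> (Eint f) ^ 3) \<longleftrightarrow>
         ((\<lambda>N. M3 y f N) \<longlonglongrightarrow>
            (Eint f) ^ 3 + 3 * Eint f * Eint (\<lambda>x. f x ^ 2) + Eint (\<lambda>x. f x ^ 3))"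
proof -
  have sm: "\<And>k x. ((deriv ^^ k) f) differentiable (at x)" and cpt: "compact (closure {x. f x \<noteq> 0})"
    using f unfolding smooth_cc_def by auto
  have cont: "continuous_on UNIV f"
    using sm[of 0] by (auto intro: differentiable_imp_continuous_on differentiable_at_imp_differentiable_on)
  have "bounded {x. f x \<noteq> 0}" using cpt compact_closure by blast
  then obtain R0 where R0: "\<And>x. x \<in> {x. f x \<noteq> 0} \<Longrightarrow> norm x \<le> R0" unfolding bounded_iff by blast
  define R where "R = max R0 1"
  have fs: "fsupp f R"
  proof
    show "continuous_on UNIV f" by (rule cont)
    show "0 < R" unfolding R_def by simp
    fix x :: real assume "R < \<bar>x\<bar>"
    then show "f x = 0" using R0[of x] unfolding R_def by force
  qed
  interpret fsupp f R by (rule fs)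
  have pc: "(\<lambda>N. pair_corr y g N) \<longlonglongrightarrow> Eint f * Eint (\<lambda>x. f x ^ 2)"
    using ppc[OF g_smooth[OF sm]] g_int by simp
  define E3 where "E3 = Eint (\<lambda>x. f x ^ 3)"
  have ev: "eventually (\<lambda>N. M3 y f N = triple_corr y f N + 3 * pair_corr y g N + E3) sequentially"
  proof -
    obtain N0 :: nat where "2 * R < real N0" using reals_Archimedean2 by blast
    then have "\<forall>N\<ge>N0 + 1. M3 y f N = triple_corr y f N + 3 * pair_corr y g N + E3"
      unfolding E3_def by (auto intro!: decomposition)
    then show ?thesis unfolding eventually_sequentially by blast
  qed
  let ?L = "Eint f * Eint (\<lambda>x. f x ^ 2)"
  have "((\<lambda>N. M3 y f N) \<longlonglongrightarrow> (Eint f) ^ 3 + 3 * Eint f * Eint (\<lambda>x. f x ^ 2) + E3) \<longleftrightarrow>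
        ((\<lambda>N. triple_corr y f N + 3 * pair_corr y g N + E3) \<longlonglongrightarrow> (Eint f) ^ 3 + 3 * ?L + E3)"
    by (rule tendsto_cong[OF ev, THEN trans]) (simp add: mult.assoc)
  also have "\<dots> \<longleftrightarrow> ((\<lambda>N. triple_corr y f N) \<longlonglongrightarrow> (Eint f) ^ 3)"
  proof
    assume "(\<lambda>N. triple_corr y f N + 3 * pair_corr y g N + E3) \<longlonglongrightarrow> (Eint f) ^ 3 + 3 * ?L + E3"
    then have "(\<lambda>N. (triple_corr y f N + 3 * pair_corr y g N + E3) - (3 * pair_corr y g N + E3)) \<longlonglongrightarrow>
        ((Eint f) ^ 3 + 3 * ?L + E3) - (3 * ?L + E3)"
      by (rule tendsto_diff) (intro tendsto_intros pc)
    then show "(\<lambda>N. triple_corr y f N) \<longlonglongrightarrow> (Eint f) ^ 3" by simp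
  next
    assume "(\<lambda>N. triple_corr y f N) \<longlonglongrightarrow> (Eint f) ^ 3"
    then show "(\<lambda>N. triple_corr y f N + 3 * pair_corr y g N + E3) \<longlonglongrightarrow> (Eint f) ^ 3 + 3 * ?L + E3"
      by (intro tendsto_intros pc)
  qed
  finally show ?thesis unfolding E3_def by simp
qed


end
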